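(* Let $n\ge 2$, let $M_1,\ldots,M_k\in\mathrm{H}(n,\mathbb{Q}(\mathrm{i}))$ be such that $M_1M_2\cdots M_k\in\Omega$, and let $\ell\ge1$ be an integer. Write $\psi(M_i)=(\boldsymbol{a}_i,\boldsymbol{b}_i,c_i)$. Consider the word consisting of $\ell$ occurrences of each index $i\in\{1,\ldots,k\}$ arranged in some order (a shuffle of $M_1^\ell M_2^\ell\cdots M_k^\ell$ by a permutation $\sigma$ of its $k\ell$ factors), and let $M$ be the corresponding product. For $i\ne j$ let $z_{ji}$ be the number of pairs (occurrence of $M_j$, occurrence of $M_i$) in this word in which the occurrence of $M_j$ is to the left of the occurrence of $M_i$. Then \[M_{1,n}=\ell\sum_{i=1}^k\Big(c_i-\tfrac12\boldsymbol{a}_i^T\boldsymbol{b}_i\Big)+\frac{\ell^2}{2}\sum_{1\le i<j\le k-1}[M_i,M_j]-\sum_{1\le i<j\le k}z_{ji}[M_i,M_j].\]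
   Context: $\mathbb{Q}(\mathrm{i})=\{a+b\mathrm{i}\mid a,b\in\mathbb{Q}\}$. $\mathrm{H}(n,\mathbb{Q}(\mathrm{i}))$ is the set of $n\times n$ matrices $M=\begin{pmatrix}1&\boldsymbol{m}_1^T&m_3\\ \boldsymbol{0}&\boldsymbol{I}_{n-2}&\boldsymbol{m}_2\\ 0&\boldsymbol{0}^T&1\end{pmatrix}$ with $\boldsymbol{m}_1,\boldsymbol{m}_2\in\mathbb{Q}(\mathrm{i})^{n-2}$, $m_3\in\mathbb{Q}(\mathrm{i})$, and $\psi(M)=(\boldsymbol{m}_1,\boldsymbol{m}_2,m_3)$. $\Omega$ is the set of such matrices with $\boldsymbol{m}_1=\boldsymbol{m}_2=\boldsymbol{0}$. $X_{1,n}$ is the top-right entry of $X$. The commutator is the scalar $[M_i,M_j]=\boldsymbol{a}_i^T\boldsymbol{b}_j-\boldsymbol{a}_j^T\boldsymbol{b}_i\in\mathbb{Q}(\mathrm{i})$ where $\psi(M_i)=(\boldsymbol{a}_i,\boldsymbol{b}_i,c_i)$, $\psi(M_j)=(\boldsymbol{a}_j,\boldsymbol{b}_j,c_j)$. *)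

theory Defs
  imports Complex_Main "HOL-Library.Multiset" "Jordan_Normal_Form.Matrix"
begin

definition QI :: "complex set" where
  "QI = {z. Re z \<in> \<rat> \<and> Im z \<in> \<rat>}"

text \<open>Rows/columns indexed 0..n-1. H(n,Q(i)): unit diagonal, entries in Q(i),
  off-diagonal entries may be nonzero only in the first row (index 0)
  or in the last column (index n-1).\<close>
definition heis :: "nat \<Rightarrow> complex mat set" where
  "heis n = {M. M \<in> carrier_mat n n \<and>
     (\<forall>i<n. \<forall>j<n. M $$ (i,j) \<in> QI) \<and>
     (\<forall>i<n. M $$ (i,i) = 1) \<and>
     (\<forall>i<n. \<forall>j<n. i \<noteq> j \<longrightarrow> \<not> (i = 0 \<or> j = n - 1) \<longrightarrow> M $$ (i,j) = 0)}"

definition psi :: "nat \<Rightarrow> complex mat \<Rightarrow> complex vec \<times> complex vec \<times> complex" where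
  "psi n M = (vec (n - 2) (\<lambda>t. M $$ (0, t + 1)),
              vec (n - 2) (\<lambda>t. M $$ (t + 1, n - 1)),
              M $$ (0, n - 1))"

definition psi_a :: "nat \<Rightarrow> complex mat \<Rightarrow> complex vec" where
  "psi_a n M = fst (psi n M)"
definition psi_b :: "nat \<Rightarrow> complex mat \<Rightarrow> complex vec" where
  "psi_b n M = fst (snd (psi n M))"
definition psi_c :: "nat \<Rightarrow> complex mat \<Rightarrow> complex" where
  "psi_c n M = snd (snd (psi n M))"

definition Omega :: "nat \<Rightarrow> complex mat set" where
  "Omega n = {M \<in> heis n. psi_a n M = 0\<^sub>v (n - 2) \<and> psi_b n M = 0\<^sub>v (n - 2)}"

definition hcomm :: "nat \<Rightarrow> complex mat \<Rightarrow> complex mat \<Rightarrow> complex" where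
  "hcomm n A B = psi_a n A \<bullet> psi_b n B - psi_a n B \<bullet> psi_b n A"

definition mat_prod_list :: "nat \<Rightarrow> complex mat list \<Rightarrow> complex mat" where
  "mat_prod_list n Ls = foldr (*) Ls (1\<^sub>m n)"

definition zcount :: "nat list \<Rightarrow> nat \<Rightarrow> nat \<Rightarrow> nat" where
  "zcount w j i = card {(p,q). p < q \<and> q < length w \<and> w ! p = j \<and> w ! q = i}"

end

theory Submission
  imports Defs
begin


definition hs :: "nat \<Rightarrow> complex mat \<Rightarrow> bool" where
  "hs n M \<longleftrightarrow> M \<in> carrier_mat n n \<and> (\<forall>i<n. M $$ (i,i) = 1) \<and>
     (\<forall>i<n. \<forall>j<n. i \<noteq> j \<longrightarrow> \<not> (i = 0 \<or> j = n - 1) \<longrightarrow> M $$ (i,j) = 0)"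

definition dt :: "nat \<Rightarrow> complex mat \<Rightarrow> complex mat \<Rightarrow> complex" where
  "dt n A B = (\<Sum>t\<in>{1..<n-1}. A $$ (0,t) * B $$ (t, n-1))"

lemma mult_entry:
  assumes "A \<in> carrier_mat n n" "B \<in> carrier_mat n n" "i < n" "j < n"
  shows "(A * B) $$ (i,j) = (\<Sum>t<n. A $$ (i,t) * B $$ (t,j))"
  using assms by (simp add: index_mult_mat scalar_prod_def lessThan_atLeast0)

lemma hs_mult:
  assumes n: "n \<ge> 2" and A: "hs n A" and B: "hs n B"
  shows "hs n (A * B)"
    "\<And>t. t \<in> {1..<n-1} \<Longrightarrow> (A*B) $$ (0,t) = A $$ (0,t) + B $$ (0,t)"
    "\<And>t. t \<in> {1..<n-1} \<Longrightarrow> (A*B) $$ (t,n-1) = A $$ (t,n-1) + B $$ (t,n-1)"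
    "(A*B) $$ (0,n-1) = A $$ (0,n-1) + B $$ (0,n-1) + dt n A B"
proof -
  have Ac: "A \<in> carrier_mat n n" and Bc: "B \<in> carrier_mat n n" using A B hs_def by auto
  have A1: "\<And>i. i<n \<Longrightarrow> A $$ (i,i) = 1" and B1: "\<And>i. i<n \<Longrightarrow> B $$ (i,i) = 1"
    using A B hs_def by auto
  have A0: "\<And>i j. i<n \<Longrightarrow> j<n \<Longrightarrow> i \<noteq> j \<Longrightarrow> i \<noteq> 0 \<Longrightarrow> j \<noteq> n-1 \<Longrightarrow> A $$ (i,j) = 0"
    using A hs_def by auto
  have B0: "\<And>i j. i<n \<Longrightarrow> j<n \<Longrightarrow> i \<noteq> j \<Longrightarrow> i \<noteq> 0 \<Longrightarrow> j \<noteq> n-1 \<Longrightarrow> B $$ (i,j) = 0"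
    using B hs_def by auto
  have diag: "(A*B) $$ (i,i) = 1" if "i < n" for i
  proof -
    have "(A*B) $$ (i,i) = (\<Sum>t<n. A $$ (i,t) * B $$ (t,i))" using mult_entry[OF Ac Bc that that] .
    also have "\<dots> = (\<Sum>t<n. if t = i then 1 else 0)"
    proof (rule sum.cong)
      fix t assume t: "t \<in> {..<n}"
      show "A $$ (i,t) * B $$ (t,i) = (if t = i then 1 else 0)"
      proof (cases "t = i")
        case True then show ?thesis using A1 B1 that by simp
      next
        case False
        show ?thesis
        proof (cases "i = 0")
          case True
          then show ?thesis using B0[of t i] False t that n by auto
        next
          case i0: False
          show ?thesis
          proof (cases "t = n-1")
            case True
            then show ?thesis using B0[of t i] False t that n i0 by auto
          next
            case False
            then show ?thesis using A0[of i t] \<open>t \<noteq> i\<close> t that i0 by auto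
          qed
        qed
      qed
    qed simp
    also have "\<dots> = 1" using that by simp
    finally show ?thesis .
  qed
  have off: "(A*B) $$ (i,j) = 0" if "i < n" "j < n" "i \<noteq> j" "i \<noteq> 0" "j \<noteq> n-1" for i j
  proof -
    have "(A*B) $$ (i,j) = (\<Sum>t<n. A $$ (i,t) * B $$ (t,j))" using mult_entry[OF Ac Bc that(1,2)] .
    also have "\<dots> = 0"
    proof (rule sum.neutral, intro ballI)
      fix t assume t: "t \<in> {..<n}"
      show "A $$ (i,t) * B $$ (t,j) = 0"
      proof (cases "t = i \<or> t = n - 1")
        case True
        then show ?thesis using B0[of t j] that t n by auto
      next
        case False
        then show ?thesis using A0[of i t] that t by auto
      qed
    qed
    finally show ?thesis .
  qed
  show "hs n (A * B)" unfolding hs_def using Ac Bc diag off by auto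
  show "(A*B) $$ (0,t) = A $$ (0,t) + B $$ (0,t)" if t: "t \<in> {1..<n-1}" for t
  proof -
    have "(A*B) $$ (0,t) = (\<Sum>s<n. A $$ (0,s) * B $$ (s,t))" using mult_entry[OF Ac Bc] t by auto
    also have "\<dots> = (\<Sum>s<n. (if s = t then A $$ (0,t) else 0) + (if s = 0 then B $$ (0,t) else 0))"
    proof (rule sum.cong)
      fix s assume s: "s \<in> {..<n}"
      show "A $$ (0,s) * B $$ (s,t) = (if s = t then A $$ (0,t) else 0) + (if s = 0 then B $$ (0,t) else 0)"
      proof -
        have "t < n" "t \<noteq> n-1" "t \<noteq> 0" using t by auto
        then show ?thesis using B1[of t] A1[of 0] B0[of s t] s by (cases "s = t"; cases "s = 0") auto
      qed
    qed simp
    also have "\<dots> = A $$ (0,t) + B $$ (0,t)" using t n by (auto simp add: sum.distrib)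
    finally show ?thesis .
  qed
  show "(A*B) $$ (t,n-1) = A $$ (t,n-1) + B $$ (t,n-1)" if t: "t \<in> {1..<n-1}" for t
  proof -
    have "(A*B) $$ (t,n-1) = (\<Sum>s<n. A $$ (t,s) * B $$ (s,n-1))" using mult_entry[OF Ac Bc] t by auto
    also have "\<dots> = (\<Sum>s<n. (if s = t then B $$ (t,n-1) else 0) + (if s = n-1 then A $$ (t,n-1) else 0))"
    proof (rule sum.cong)
      fix s assume s: "s \<in> {..<n}"
      show "A $$ (t,s) * B $$ (s,n-1) = (if s = t then B $$ (t,n-1) else 0) + (if s = n-1 then A $$ (t,n-1) else 0)"
      proof -
        have "t < n" "t \<noteq> n-1" "t \<noteq> 0" "n - 1 < n" using t n by auto
        then show ?thesis using A1[of t] B1[of "n-1"] A0[of t s] s by (cases "s = t"; cases "s = n-1") auto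
      qed
    qed simp
    also have "\<dots> = A $$ (t,n-1) + B $$ (t,n-1)" using t n by (auto simp add: sum.distrib)
    finally show ?thesis .
  qed
  show "(A*B) $$ (0,n-1) = A $$ (0,n-1) + B $$ (0,n-1) + dt n A B"
  proof -
    have "(A*B) $$ (0,n-1) = (\<Sum>s<n. A $$ (0,s) * B $$ (s,n-1))" using mult_entry[OF Ac Bc] n by auto
    also have "\<dots> = (\<Sum>s<n. (if s = 0 then B $$ (0,n-1) else 0) + (if s = n-1 then A $$ (0,n-1) else 0)
        + (if s \<in> {1..<n-1} then A $$ (0,s) * B $$ (s,n-1) else 0))"
    proof (rule sum.cong)
      fix s assume s: "s \<in> {..<n}"
      show "A $$ (0,s) * B $$ (s,n-1) = (if s = 0 then B $$ (0,n-1) else 0) + (if s = n-1 then A $$ (0,n-1) else 0)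
        + (if s \<in> {1..<n-1} then A $$ (0,s) * B $$ (s,n-1) else 0)"
        using A1[of 0] B1[of "n-1"] s n by auto
    qed simp
    also have "\<dots> = B $$ (0,n-1) + A $$ (0,n-1) + (\<Sum>s<n. if s \<in> {1..<n-1} then A $$ (0,s) * B $$ (s,n-1) else 0)"
      using n by (simp add: sum.distrib)
    also have "(\<Sum>s<n. if s \<in> {1..<n-1} then A $$ (0,s) * B $$ (s,n-1) else 0) = dt n A B"
    proof -
      have "{..<n} \<inter> {1..<n-1} = {1..<n-1}" by auto
      then show ?thesis unfolding dt_def
        using sum.inter_restrict[of "{..<n}" "\<lambda>s. A $$ (0,s) * B $$ (s,n-1)" "{1..<n-1}"] by simp
    qed
    finally show ?thesis by simp
  qed
qed



lemma count_card: "count (mset w) i = card {p. p < length w \<and> w ! p = i}"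
proof -
  have "count (mset w) i = length (filter ((=) i) w)" by (simp add: count_mset count_list_eq_length_filter)
  also have "\<dots> = card {p. p < length w \<and> w ! p = i}" by (simp add: length_filter_conv_card eq_commute)
  finally show ?thesis .
qed

lemma zcount_snoc: "zcount (w @ [x]) i j = zcount w i j + (if j = x then count (mset w) i else 0)"
proof -
  let ?S = "{(p,q). p < q \<and> q < length w \<and> w ! p = i \<and> w ! q = j}"
  let ?T = "(\<lambda>p. (p, length w)) ` {p. p < length w \<and> w ! p = i}"
  have fS: "finite ?S" by (rule finite_subset[of _ "{..<length w} \<times> {..<length w}"]) auto
  have fT: "finite ?T" by auto
  have cT: "card ?T = count (mset w) i"
    by (subst card_image) (auto simp: inj_on_def count_card)
  have eq: "{(p,q). p < q \<and> q < length (w @ [x]) \<and> (w @ [x]) ! p = i \<and> (w @ [x]) ! q = j}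
      = ?S \<union> (if j = x then ?T else {})"
    by (auto simp: nth_append less_Suc_eq split: if_splits)
  have dj: "?S \<inter> ?T = {}" by auto
  show ?thesis unfolding zcount_def eq
    using card_Un_disjoint[OF fS fT dj] cT by auto
qed

lemma zcount_nil: "zcount [] i j = 0" by (simp add: zcount_def)

lemma prod_snoc:
  assumes "\<forall>M\<in>set xs. M \<in> carrier_mat n n" "x \<in> carrier_mat n n"
  shows "mat_prod_list n (xs @ [x]) = mat_prod_list n xs * x \<and> mat_prod_list n xs \<in> carrier_mat n n"
  using assms
proof (induction xs)
  case Nil
  have "mat_prod_list n ([] @ [x]) = x * 1\<^sub>m n" by (simp add: mat_prod_list_def)
  also have "\<dots> = x" using Nil.prems(2) by (rule right_mult_one_mat)
  also have "x = 1\<^sub>m n * x" using Nil.prems(2) by (rule left_mult_one_mat[symmetric])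
  finally show ?case by (simp add: mat_prod_list_def)
next
  case (Cons y xs)
  have y: "y \<in> carrier_mat n n" using Cons.prems(1) by simp
  have xs: "\<forall>M\<in>set xs. M \<in> carrier_mat n n" using Cons.prems(1) by simp
  have IH1: "mat_prod_list n (xs @ [x]) = mat_prod_list n xs * x"
    and IH2: "mat_prod_list n xs \<in> carrier_mat n n" using Cons.IH[OF xs Cons.prems(2)] by blast+
  have e1: "mat_prod_list n ((y # xs) @ [x]) = y * mat_prod_list n (xs @ [x])"
    and e2: "mat_prod_list n (y # xs) = y * mat_prod_list n xs" by (simp_all add: mat_prod_list_def)
  have "mat_prod_list n ((y # xs) @ [x]) = y * (mat_prod_list n xs * x)" using e1 IH1 by simp
  also have "\<dots> = y * mat_prod_list n xs * x"
    using assoc_mult_mat[OF y IH2 Cons.prems(2)] by simp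
  finally have "mat_prod_list n ((y # xs) @ [x]) = mat_prod_list n (y # xs) * x" using e2 by simp
  moreover have "mat_prod_list n (y # xs) \<in> carrier_mat n n" using e2 y IH2 by simp
  ultimately show ?case by blast
qed

lemma word_formula:
  assumes n: "n \<ge> 2" and fI: "finite I"
  shows "set w \<subseteq> I \<Longrightarrow> (\<forall>x\<in>set w. hs n (Ms x)) \<Longrightarrow>
    hs n (mat_prod_list n (map Ms w)) \<and>
    (\<forall>t\<in>{1..<n-1}. mat_prod_list n (map Ms w) $$ (0,t) = (\<Sum>i\<in>I. of_nat (count (mset w) i) * Ms i $$ (0,t))) \<and>
    (\<forall>t\<in>{1..<n-1}. mat_prod_list n (map Ms w) $$ (t,n-1) = (\<Sum>i\<in>I. of_nat (count (mset w) i) * Ms i $$ (t,n-1))) \<and>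
    mat_prod_list n (map Ms w) $$ (0,n-1) = (\<Sum>i\<in>I. of_nat (count (mset w) i) * Ms i $$ (0,n-1))
       + (\<Sum>i\<in>I. \<Sum>j\<in>I. of_nat (zcount w i j) * dt n (Ms i) (Ms j))"
proof (induction w rule: rev_induct)
  case Nil
  have "hs n (1\<^sub>m n)" unfolding hs_def by auto
  then show ?case using n by (auto simp: mat_prod_list_def zcount_nil)
next
  case (snoc x w)
  let ?P = "mat_prod_list n (map Ms w)"
  let ?c = "\<lambda>i. of_nat (count (mset w) i) :: complex"
  have xI: "x \<in> I" and hx: "hs n (Ms x)" using snoc.prems by auto
  have IH: "hs n ?P"
    "\<And>t. t\<in>{1..<n-1} \<Longrightarrow> ?P $$ (0,t) = (\<Sum>i\<in>I. ?c i * Ms i $$ (0,t))"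
    "\<And>t. t\<in>{1..<n-1} \<Longrightarrow> ?P $$ (t,n-1) = (\<Sum>i\<in>I. ?c i * Ms i $$ (t,n-1))"
    "?P $$ (0,n-1) = (\<Sum>i\<in>I. ?c i * Ms i $$ (0,n-1)) + (\<Sum>i\<in>I. \<Sum>j\<in>I. of_nat (zcount w i j) * dt n (Ms i) (Ms j))"
    using snoc by auto
  have car: "\<forall>M\<in>set (map Ms w). M \<in> carrier_mat n n" "Ms x \<in> carrier_mat n n"
    using snoc.prems hs_def by auto
  have Peq: "mat_prod_list n (map Ms (w @ [x])) = ?P * Ms x"
    using prod_snoc[OF car] by simp
  have cnt: "\<And>i. of_nat (count (mset (w @ [x])) i) = ?c i + (if i = x then 1 else 0)" by simp
  have sumx: "\<And>f. (\<Sum>i\<in>I. (?c i + (if i = x then 1 else 0)) * f i) = (\<Sum>i\<in>I. ?c i * f i) + f x"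
  proof -
    fix f :: "nat \<Rightarrow> complex"
    have "(\<Sum>i\<in>I. (?c i + (if i = x then 1 else 0)) * f i) = (\<Sum>i\<in>I. ?c i * f i + (if i = x then f i else 0))"
      by (rule sum.cong) (auto simp: distrib_right)
    also have "\<dots> = (\<Sum>i\<in>I. ?c i * f i) + f x" using xI fI by (simp add: sum.distrib)
    finally show "(\<Sum>i\<in>I. (?c i + (if i = x then 1 else 0)) * f i) = (\<Sum>i\<in>I. ?c i * f i) + f x" .
  qed
  have dtP: "dt n ?P (Ms x) = (\<Sum>i\<in>I. ?c i * dt n (Ms i) (Ms x))"
  proof -
    have "dt n ?P (Ms x) = (\<Sum>t\<in>{1..<n-1}. (\<Sum>i\<in>I. ?c i * Ms i $$ (0,t)) * Ms x $$ (t,n-1))"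
      unfolding dt_def using IH(2) by simp
    also have "\<dots> = (\<Sum>i\<in>I. ?c i * dt n (Ms i) (Ms x))"
    proof -
      have "(\<Sum>t\<in>{1..<n-1}. (\<Sum>i\<in>I. ?c i * Ms i $$ (0,t)) * Ms x $$ (t,n-1))
          = (\<Sum>t\<in>{1..<n-1}. \<Sum>i\<in>I. ?c i * (Ms i $$ (0,t) * Ms x $$ (t,n-1)))"
        by (simp add: sum_distrib_right mult.assoc)
      also have "\<dots> = (\<Sum>i\<in>I. \<Sum>t\<in>{1..<n-1}. ?c i * (Ms i $$ (0,t) * Ms x $$ (t,n-1)))"
        by (rule sum.swap)
      also have "\<dots> = (\<Sum>i\<in>I. ?c i * dt n (Ms i) (Ms x))"
        unfolding dt_def by (simp add: sum_distrib_left)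
      finally show ?thesis .
    qed
    finally show ?thesis .
  qed
  have zsum: "(\<Sum>i\<in>I. \<Sum>j\<in>I. of_nat (zcount (w @ [x]) i j) * dt n (Ms i) (Ms j))
      = (\<Sum>i\<in>I. \<Sum>j\<in>I. of_nat (zcount w i j) * dt n (Ms i) (Ms j)) + (\<Sum>i\<in>I. ?c i * dt n (Ms i) (Ms x))"
  proof -
    have "(\<Sum>i\<in>I. \<Sum>j\<in>I. of_nat (zcount (w @ [x]) i j) * dt n (Ms i) (Ms j))
      = (\<Sum>i\<in>I. (\<Sum>j\<in>I. of_nat (zcount w i j) * dt n (Ms i) (Ms j)) + (\<Sum>j\<in>I. if j = x then ?c i * dt n (Ms i) (Ms j) else 0))"
      by (intro sum.cong refl) (auto simp: zcount_snoc distrib_right sum.distrib intro!: sum.cong)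
    also have "\<dots> = (\<Sum>i\<in>I. \<Sum>j\<in>I. of_nat (zcount w i j) * dt n (Ms i) (Ms j)) + (\<Sum>i\<in>I. ?c i * dt n (Ms i) (Ms x))"
      using xI fI by (simp add: sum.distrib sum.delta')
    finally show ?thesis .
  qed
  show ?case
  proof (intro conjI ballI)
    show "hs n (mat_prod_list n (map Ms (w @ [x])))" using Peq hs_mult(1)[OF n IH(1) hx] by simp
  next
    fix t assume t: "t \<in> {1..<n-1}"
    show "mat_prod_list n (map Ms (w @ [x])) $$ (0,t) = (\<Sum>i\<in>I. of_nat (count (mset (w @ [x])) i) * Ms i $$ (0,t))"
      unfolding Peq cnt sumx using hs_mult(2)[OF n IH(1) hx t] IH(2)[OF t] by simp
  next
    fix t assume t: "t \<in> {1..<n-1}"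
    show "mat_prod_list n (map Ms (w @ [x])) $$ (t,n-1) = (\<Sum>i\<in>I. of_nat (count (mset (w @ [x])) i) * Ms i $$ (t,n-1))"
      unfolding Peq cnt sumx using hs_mult(3)[OF n IH(1) hx t] IH(3)[OF t] by simp
  next
    show "mat_prod_list n (map Ms (w @ [x])) $$ (0,n-1) = (\<Sum>i\<in>I. of_nat (count (mset (w @ [x])) i) * Ms i $$ (0,n-1))
       + (\<Sum>i\<in>I. \<Sum>j\<in>I. of_nat (zcount (w @ [x]) i j) * dt n (Ms i) (Ms j))"
      unfolding Peq cnt sumx zsum using hs_mult(4)[OF n IH(1) hx] IH(4) dtP by (simp add: algebra_simps)
  qed
qed


lemma zcount_pairs:
  "zcount w i j + zcount w j i = count (mset w) i * count (mset w) j \<or> i = j"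
  "2 * zcount w i i = count (mset w) i * (count (mset w) i - 1)"
proof -
  have "(i \<noteq> j \<longrightarrow> zcount w i j + zcount w j i = count (mset w) i * count (mset w) j) \<and>
        2 * zcount w i i = count (mset w) i * (count (mset w) i - 1)"
  proof (induction w rule: rev_induct)
    case Nil then show ?case by (simp add: zcount_nil)
  next
    case (snoc x w)
    then show ?case
      by (cases "count (mset w) i") (auto simp: zcount_snoc algebra_simps)
  qed
  then show "zcount w i j + zcount w j i = count (mset w) i * count (mset w) j \<or> i = j"
    "2 * zcount w i i = count (mset w) i * (count (mset w) i - 1)" by auto
qed



lemma sum_tri_last:
  fixes g :: "nat \<Rightarrow> nat \<Rightarrow> complex"
  shows "(\<Sum>i\<in>{1..Suc m}. \<Sum>j\<in>{i+1..Suc m}. g i j) = (\<Sum>i\<in>{1..m}. \<Sum>j\<in>{i+1..m}. g i j) + (\<Sum>i\<in>{1..m}. g i (Suc m))"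
proof -
  have "(\<Sum>i\<in>{1..Suc m}. \<Sum>j\<in>{i+1..Suc m}. g i j) = (\<Sum>i\<in>{1..m}. \<Sum>j\<in>{i+1..Suc m}. g i j)"
    by (simp add: sum.atLeast_Suc_atMost_Suc_shift del: sum.op_ivl_Suc) 
  also have "\<dots> = (\<Sum>i\<in>{1..m}. (\<Sum>j\<in>{i+1..m}. g i j) + g i (Suc m))"
  proof (rule sum.cong)
    fix i assume "i \<in> {1..m}"
    then have "{i+1..Suc m} = insert (Suc m) {i+1..m}" by auto
    then show "(\<Sum>j\<in>{i+1..Suc m}. g i j) = (\<Sum>j\<in>{i+1..m}. g i j) + g i (Suc m)" by simp
  qed simp
  finally show ?thesis by (simp add: sum.distrib)
qed

lemma sum_sq_split:
  fixes f :: "nat \<Rightarrow> nat \<Rightarrow> complex"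
  shows "(\<Sum>i\<in>{1..k}. \<Sum>j\<in>{1..k}. f i j) = (\<Sum>i\<in>{1..k}. f i i) + (\<Sum>i\<in>{1..k}. \<Sum>j\<in>{i+1..k}. f i j + f j i)"
proof (induction k)
  case 0
  then show ?case by simp
next
  case (Suc m)
  have "(\<Sum>i\<in>{1..Suc m}. \<Sum>j\<in>{1..Suc m}. f i j) = (\<Sum>i\<in>{1..Suc m}. (\<Sum>j\<in>{1..m}. f i j) + f i (Suc m))"
    by (simp add: add.commute)
  also have "\<dots> = (\<Sum>i\<in>{1..m}. \<Sum>j\<in>{1..m}. f i j) + (\<Sum>j\<in>{1..m}. f (Suc m) j) + (\<Sum>i\<in>{1..m}. f i (Suc m)) + f (Suc m) (Suc m)"
    by (simp add: sum.distrib)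
  also have "\<dots> = (\<Sum>i\<in>{1..Suc m}. f i i) + (\<Sum>i\<in>{1..Suc m}. \<Sum>j\<in>{i+1..Suc m}. f i j + f j i)"
    unfolding Suc.IH sum_tri_last by (simp add: sum.distrib algebra_simps)
  finally show ?case .
qed

lemma count_rep:
  assumes "distinct xs" "i \<in> set xs"
  shows "count (mset (concat (map (\<lambda>j. replicate l j) xs))) i = l"
  using assms
proof (induction xs)
  case Nil then show ?case by simp
next
  case (Cons y ys)
  show ?case
  proof (cases "y = i")
    case True
    then have "i \<notin> set (concat (map (\<lambda>j. replicate l j) ys))" using Cons.prems by auto
    then have "count (mset (concat (map (\<lambda>j. replicate l j) ys))) i = 0" by (simp add: count_mset_0_iff)
    then show ?thesis using True by simp
  next
    case False
    then show ?thesis using Cons by simp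
  qed
qed

lemma dot_dt: "n \<ge> 2 \<Longrightarrow> psi_a n A \<bullet> psi_b n B = dt n A B"
proof -
  assume n: "n \<ge> 2"
  have "psi_a n A \<bullet> psi_b n B = (\<Sum>i\<in>{0..<n-2}. A $$ (0, Suc i) * B $$ (Suc i, n-1))"
    by (simp add: psi_a_def psi_b_def psi_def scalar_prod_def)
  also have "\<dots> = (\<Sum>t\<in>{Suc 0..<Suc (n-2)}. A $$ (0, t) * B $$ (t, n-1))"
    by (rule sum.shift_bounds_Suc_ivl[symmetric])
  also have "Suc (n-2) = n - 1" using n by simp
  finally show ?thesis by (simp add: dt_def)
qed

lemma alg: fixes Dl S S2 T L C ZZ :: complex
  assumes "Dl + S + T = 0" "S - T = S2" "C = L * C'"
  shows "C + (L * (L - 1) / 2 * Dl + L^2 * S - ZZ) = L * (C' - Dl / 2) + L^2 / 2 * S2 - ZZ"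
proof -
  have e1: "Dl = - S - T" using assms(1) by (simp add: algebra_simps eq_neg_iff_add_eq_0)
  have e2: "S2 = S - T" using assms(2) by simp
  show ?thesis unfolding e1 e2 assms(3) by (simp add: field_simps power2_eq_square)
qed

theorem lemma4:
  fixes n k l :: nat and Ms :: "nat \<Rightarrow> complex mat" and w :: "nat list"
  assumes "n \<ge> 2" and "k \<ge> 1" and "l \<ge> 1"
    and "\<forall>i\<in>{1..k}. Ms i \<in> heis n"
    and "mat_prod_list n (map Ms [1..<k+1]) \<in> Omega n"
    and "mset w = mset (concat (map (\<lambda>i. replicate l i) [1..<k+1]))"
  shows "mat_prod_list n (map Ms w) $$ (0, n - 1) =
      of_nat l * (\<Sum>i\<in>{1..k}. psi_c n (Ms i) - (1/2) * (psi_a n (Ms i) \<bullet> psi_b n (Ms i)))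
    + (of_nat l ^ 2 / 2) * (\<Sum>i\<in>{1..k-1}. \<Sum>j\<in>{i+1..k-1}. hcomm n (Ms i) (Ms j))
    - (\<Sum>i\<in>{1..k}. \<Sum>j\<in>{i+1..k}. of_nat (zcount w j i) * hcomm n (Ms i) (Ms j))"
proof -
  note n = assms(1)
  define I where "I = {1..k}"
  obtain m where km: "k = Suc m" using assms(2) by (cases k) auto
  define D where "D i j = dt n (Ms i) (Ms j)" for i j
  define L where "L = (of_nat l :: complex)"
  define Z where "Z i j = (of_nat (zcount w i j) :: complex)" for i j
  define c where "c i = Ms i $$ (0, n-1)" for i
  have fI: "finite I" by (simp add: I_def)
  have hsI: "\<And>i. i \<in> I \<Longrightarrow> hs n (Ms i)"
    using assms(4) unfolding I_def heis_def hs_def by auto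
  have setw: "set w = I"
  proof -
    have "set w = set_mset (mset w)" by simp
    also have "\<dots> = set (concat (map (\<lambda>i. replicate l i) [1..<k+1]))" using assms(6) by simp
    also have "\<dots> = I" using assms(3) by (auto simp: I_def)
    finally show ?thesis .
  qed
  have cntw: "\<And>i. i \<in> I \<Longrightarrow> count (mset w) i = l"
    unfolding assms(6) by (rule count_rep) (auto simp: I_def)
  have WF: "mat_prod_list n (map Ms w) $$ (0,n-1) = (\<Sum>i\<in>I. L * c i) + (\<Sum>i\<in>I. \<Sum>j\<in>I. Z i j * D i j)"
  proof -
    have "mat_prod_list n (map Ms w) $$ (0,n-1) = (\<Sum>i\<in>I. of_nat (count (mset w) i) * Ms i $$ (0,n-1))
       + (\<Sum>i\<in>I. \<Sum>j\<in>I. of_nat (zcount w i j) * dt n (Ms i) (Ms j))"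
      using word_formula[OF n fI, of w Ms] setw hsI by auto
    then show ?thesis using cntw unfolding L_def Z_def D_def c_def by simp
  qed
  define w0 where "w0 = [1..<k+1]"
  have setw0: "set w0 = I" by (auto simp: w0_def I_def)
  have cnt0: "\<And>i. i \<in> I \<Longrightarrow> count (mset w0) i = 1"
    using setw0 distinct_count_atmost_1[of w0] by (auto simp: w0_def)
  have rowsum: "(\<Sum>i\<in>I. Ms i $$ (0,t)) = 0" if t: "t \<in> {1..<n-1}" for t
  proof -
    have "mat_prod_list n (map Ms w0) $$ (0,t) = (\<Sum>i\<in>I. Ms i $$ (0,t))"
      using word_formula[OF n fI, of w0 Ms] setw0 hsI t cnt0 by auto
    moreover have "mat_prod_list n (map Ms w0) $$ (0,t) = 0"
    proof -
      have "psi_a n (mat_prod_list n (map Ms w0)) = 0\<^sub>v (n-2)" using assms(5) by (simp add: Omega_def w0_def)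
      then have "psi_a n (mat_prod_list n (map Ms w0)) $ (t-1) = 0" using t by auto
      moreover have "t-1 < n-2" "Suc (t-1) = t" using t by auto
      ultimately show ?thesis by (simp add: psi_a_def psi_def)
    qed
    ultimately show ?thesis by simp
  qed
  have colsum: "(\<Sum>i\<in>I. Ms i $$ (t,n-1)) = 0" if t: "t \<in> {1..<n-1}" for t
  proof -
    have "mat_prod_list n (map Ms w0) $$ (t,n-1) = (\<Sum>i\<in>I. Ms i $$ (t,n-1))"
      using word_formula[OF n fI, of w0 Ms] setw0 hsI t cnt0 by auto
    moreover have "mat_prod_list n (map Ms w0) $$ (t,n-1) = 0"
    proof -
      have "psi_b n (mat_prod_list n (map Ms w0)) = 0\<^sub>v (n-2)" using assms(5) by (simp add: Omega_def w0_def)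
      then have "psi_b n (mat_prod_list n (map Ms w0)) $ (t-1) = 0" using t by auto
      moreover have "t-1 < n-2" "Suc (t-1) = t" using t by auto
      ultimately show ?thesis by (simp add: psi_b_def psi_def)
    qed
    ultimately show ?thesis by simp
  qed
  have Dcol: "(\<Sum>i\<in>I. D i j) = 0" for j
  proof -
    have "(\<Sum>i\<in>I. D i j) = (\<Sum>t\<in>{1..<n-1}. (\<Sum>i\<in>I. Ms i $$ (0,t)) * Ms j $$ (t,n-1))"
      unfolding D_def dt_def by (simp add: sum_distrib_right sum.swap[of _ I])
    also have "\<dots> = 0" using rowsum by simp
    finally show ?thesis .
  qed
  have Drow: "(\<Sum>j\<in>I. D i j) = 0" for i
  proof -
    have "(\<Sum>j\<in>I. D i j) = (\<Sum>t\<in>{1..<n-1}. Ms i $$ (0,t) * (\<Sum>j\<in>I. Ms j $$ (t,n-1)))"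
      unfolding D_def dt_def by (simp add: sum_distrib_left sum.swap[of _ I])
    also have "\<dots> = 0" using colsum by simp
    finally show ?thesis .
  qed
  have Zdiag: "Z i i = L * (L - 1) / 2" if "i \<in> I" for i
  proof -
    have "2 * zcount w i i = l * (l - 1)" using zcount_pairs(2)[of w i] cntw[OF that] by simp
    then have "of_nat (2 * zcount w i i) = (of_nat (l * (l - 1)) :: complex)" by metis
    then have e: "2 * Z i i = L * (L - 1)" using assms(3) by (simp add: Z_def L_def of_nat_diff)
    have "Z i i = (2 * Z i i) / 2" by simp
    also have "\<dots> = L * (L - 1) / 2" using e by simp
    finally show ?thesis .
  qed
  have Zoff: "Z i j = L^2 - Z j i" if "i \<in> I" "j \<in> I" "i \<noteq> j" for i j
  proof -
    have "zcount w i j + zcount w j i = l * l" using zcount_pairs(1)[of w i j] cntw that by simp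
    then have "of_nat (zcount w i j + zcount w j i) = (of_nat (l * l) :: complex)" by metis
    then have "Z i j + Z j i = L^2" by (simp add: Z_def L_def power2_eq_square)
    then show ?thesis by (simp add: algebra_simps)
  qed
  define S where "S = (\<Sum>i\<in>I. \<Sum>j\<in>{i+1..k}. D i j)"
  define T where "T = (\<Sum>i\<in>I. \<Sum>j\<in>{i+1..k}. D j i)"
  define S2 where "S2 = (\<Sum>i\<in>{1..m}. \<Sum>j\<in>{i+1..m}. D i j - D j i)"
  define ZZ where "ZZ = (\<Sum>i\<in>I. \<Sum>j\<in>{i+1..k}. Z j i * (D i j - D j i))"
  define Dl where "Dl = (\<Sum>i\<in>I. D i i)"
  have tot: "Dl + S + T = 0"
  proof -
    have "(\<Sum>i\<in>I. \<Sum>j\<in>I. D i j) = 0" using Drow by simp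
    then show ?thesis unfolding I_def Dl_def S_def T_def sum_sq_split by (simp add: sum.distrib add.assoc)
  qed
  have ST: "S - T = S2"
  proof -
    have "S - T = (\<Sum>i\<in>{1..Suc m}. \<Sum>j\<in>{i+1..Suc m}. D i j - D j i)"
      unfolding S_def T_def I_def km by (simp add: sum_subtractf)
    also have "\<dots> = S2 + (\<Sum>i\<in>{1..m}. D i (Suc m) - D (Suc m) i)"
      unfolding sum_tri_last S2_def ..
    also have "(\<Sum>i\<in>{1..m}. D i (Suc m) - D (Suc m) i) = 0"
    proof -
      have "(\<Sum>i\<in>{1..m}. D i (Suc m)) = - D (Suc m) (Suc m)"
        using Dcol[of "Suc m"] unfolding I_def km by (simp add: add_eq_0_iff)
      moreover have "(\<Sum>i\<in>{1..m}. D (Suc m) i) = - D (Suc m) (Suc m)"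
        using Drow[of "Suc m"] unfolding I_def km by (simp add: add_eq_0_iff)
      ultimately show ?thesis by (simp add: sum_subtractf)
    qed
    finally show ?thesis by simp
  qed
  have ZD: "(\<Sum>i\<in>I. \<Sum>j\<in>I. Z i j * D i j) = L * (L - 1) / 2 * Dl + L^2 * S - ZZ"
  proof -
    have "(\<Sum>i\<in>I. \<Sum>j\<in>I. Z i j * D i j) = (\<Sum>i\<in>I. Z i i * D i i) + (\<Sum>i\<in>I. \<Sum>j\<in>{i+1..k}. Z i j * D i j + Z j i * D j i)"
      unfolding I_def by (rule sum_sq_split)
    also have "(\<Sum>i\<in>I. Z i i * D i i) = L * (L - 1) / 2 * Dl"
      unfolding Dl_def sum_distrib_left by (rule sum.cong) (simp_all only: Zdiag)
    also have "(\<Sum>i\<in>I. \<Sum>j\<in>{i+1..k}. Z i j * D i j + Z j i * D j i) = (\<Sum>i\<in>I. \<Sum>j\<in>{i+1..k}. L^2 * D i j - Z j i * (D i j - D j i))"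
    proof (intro sum.cong refl)
      fix i j assume i: "i \<in> I" and j: "j \<in> {i+1..k}"
      then have "j \<in> I" "i \<noteq> j" by (auto simp: I_def)
      then have zz: "Z i j = L^2 - Z j i" using Zoff[OF i] by blast
      show "Z i j * D i j + Z j i * D j i = L^2 * D i j - Z j i * (D i j - D j i)"
        unfolding zz by (simp add: algebra_simps)
    qed
    also have "\<dots> = L^2 * S - ZZ" unfolding S_def ZZ_def by (simp add: sum_subtractf sum_distrib_left)
    finally show ?thesis by simp
  qed
  have conv1: "psi_c n (Ms i) - (1/2) * (psi_a n (Ms i) \<bullet> psi_b n (Ms i)) = c i - D i i / 2" for i
    using dot_dt[OF n] by (simp add: psi_c_def psi_def c_def D_def)
  have conv2: "hcomm n (Ms i) (Ms j) = D i j - D j i" for i j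
    using dot_dt[OF n] by (simp add: hcomm_def D_def)
  have rhs: "of_nat l * (\<Sum>i\<in>{1..k}. psi_c n (Ms i) - (1/2) * (psi_a n (Ms i) \<bullet> psi_b n (Ms i)))
    + (of_nat l ^ 2 / 2) * (\<Sum>i\<in>{1..k-1}. \<Sum>j\<in>{i+1..k-1}. hcomm n (Ms i) (Ms j))
    - (\<Sum>i\<in>{1..k}. \<Sum>j\<in>{i+1..k}. of_nat (zcount w j i) * hcomm n (Ms i) (Ms j))
    = L * ((\<Sum>i\<in>I. c i) - Dl / 2) + L^2 / 2 * S2 - ZZ"
    unfolding conv1 conv2 L_def[symmetric] I_def[symmetric] Z_def[symmetric]
    by (simp add: km S2_def ZZ_def Dl_def sum_subtractf sum_divide_distrib)
  show ?thesis unfolding rhs WF ZD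
    by (rule alg[OF tot ST]) (simp add: sum_distrib_left)
qed

end
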